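(* Let $X_0^*$ be a $\{1,2,\dots\}$-valued random variable with $\mathbf P(X_0^*\ge2)>0$ and $\mathbf E(X_0^*m^{X_0^*})<\infty$, let $p>p_c$, let $X_0$ have law $(1-p)\delta_0+pP_{X_0^*}$, and let $n\ge0$. Then $$[\delta_n-\varphi_n(s)]^2\le 2\,(H_n(0)+\delta_n)\,\Theta_n(s),\qquad s\in(0,m).$$
   Context: Fix an integer $m\ge2$. Recursive system: $X_{n+1}$ has the law of $(X_{n,1}+\cdots+X_{n,m}-1)^+$, with $X_{n,i}$ independent copies of $X_n$. $p_c:=\frac{1}{1+\mathbf E\{[(m-1)X_0^*-1]m^{X_0^*}\}}$. $H_n(s):=\mathbf E(s^{X_n})$; $\delta_n:=(m-1)\mathbf E(X_nm^{X_n})-\mathbf E(m^{X_n})$; $\varphi_n(s):=(m-1)sH_n'(s)-H_n(s)$; and $$\Theta_n(s):=[H_n(s)-s(s-1)H_n'(s)]-\frac{(m-1)(m-s)}{m}[2sH_n'(s)+s^2H_n''(s)]+\delta_n .$$ *)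

theory Defs
  imports "HOL-Probability.Probability"
begin

primrec sum_law :: "nat \<Rightarrow> nat pmf \<Rightarrow> nat pmf" where
  "sum_law 0 mu = return_pmf 0"
| "sum_law (Suc k) mu = bind_pmf mu (\<lambda>x. map_pmf (\<lambda>y. x + y) (sum_law k mu))"

text \<open>Law of X_n in the recursive system with parameter m, started from the law mu0 of X_0:
  X_{n+1} has the law of (X_{n,1}+...+X_{n,m}-1)^+ (truncated nat subtraction).\<close>
primrec sys_law :: "nat \<Rightarrow> nat pmf \<Rightarrow> nat \<Rightarrow> nat pmf" where
  "sys_law m mu0 0 = mu0"
| "sys_law m mu0 (Suc n) = map_pmf (\<lambda>y. y - 1) (sum_law m (sys_law m mu0 n))"

definition init_law :: "real \<Rightarrow> nat pmf \<Rightarrow> nat pmf" where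
  "init_law p Xs = bind_pmf (bernoulli_pmf p) (\<lambda>b. if b then Xs else return_pmf 0)"

definition p_crit :: "nat \<Rightarrow> nat pmf \<Rightarrow> real" where
  "p_crit m Xs = 1 / (1 + measure_pmf.expectation Xs
      (\<lambda>k. ((real m - 1) * real k - 1) * real m ^ k))"

definition Hgf :: "nat pmf \<Rightarrow> real \<Rightarrow> real" where
  "Hgf mu s = measure_pmf.expectation mu (\<lambda>k. s ^ k)"

definition delta_c :: "nat \<Rightarrow> nat pmf \<Rightarrow> real" where
  "delta_c m mu = (real m - 1) * measure_pmf.expectation mu (\<lambda>k. real k * real m ^ k)
      - measure_pmf.expectation mu (\<lambda>k. real m ^ k)"

definition phi_c :: "nat \<Rightarrow> nat pmf \<Rightarrow> real \<Rightarrow> real" where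
  "phi_c m mu s = (real m - 1) * s * deriv (Hgf mu) s - Hgf mu s"

definition Theta_c :: "nat \<Rightarrow> nat pmf \<Rightarrow> real \<Rightarrow> real" where
  "Theta_c m mu s = (Hgf mu s - s * (s - 1) * deriv (Hgf mu) s)
      - (real m - 1) * (real m - s) / real m
          * (2 * s * deriv (Hgf mu) s + s^2 * deriv (deriv (Hgf mu)) s)
      + delta_c m mu"

end

theory Submission imports Defs begin

lemma L2:
  fixes x :: real and k :: nat
  assumes x0: "0 \<le> x" and x1: "x \<le> 1"
  shows "(1 - x^k)^2 \<le> 2*(1 - (real k+1)*x^k + real k*x^(k+1))"
proof (cases k)
  case 0 then show ?thesis by simp
next
  case (Suc j)
  define f where "f y = 2*(1 - (real k+1)*y^k + real k*y^(k+1)) - (1-y^k)^2" for y :: real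
  define d where "d y = -2*real k*y^j*(real k - (real k+1)*y + y^k)" for y :: real
  have der: "DERIV f y :> d y" for y
  proof -
    have "DERIV f y :> (2*(-(real k+1)*(real k*y^j) + real k*((real k+1)*y^k)) - 2*(1-y^k)*(-(real k*y^j)))"
      unfolding f_def by (rule derivative_eq_intros refl | simp add: Suc algebra_simps)+
    moreover have "(2*(-(real k+1)*(real k*y^j) + real k*((real k+1)*y^k)) - 2*(1-y^k)*(-(real k*y^j))) = d y"
      unfolding d_def using Suc by (simp add: algebra_simps power_add)
    ultimately show ?thesis by simp
  qed
  have dn: "d y \<le> 0" if "0 \<le> y" "y \<le> 1" for y
  proof -
    have "1 + real k * (y - 1) \<le> (1 + (y-1))^k"
      by (rule Bernoulli_inequality) (use that in simp)
    then have "0 \<le> real k - (real k+1)*y + y^k" using that by (simp add: algebra_simps)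
    moreover have "0 \<le> 2*real k*y^j" using that by simp
    ultimately show ?thesis unfolding d_def
      by (metis mult_nonneg_nonneg neg_le_0_iff_le mult_minus_left)
  qed
  have "f 1 \<le> f x"
    by (rule DERIV_nonpos_imp_nonincreasing[OF x1]) (use der dn x0 in \<open>fastforce\<close>)
  moreover have "f 1 = 0" unfolding f_def by simp
  ultimately show ?thesis unfolding f_def by simp
qed

lemma perk:
  fixes M s t :: real and k :: nat
  assumes M2: "M \<ge> 2" and s0: "0 < s" and sM: "s < M"
  shows "0 \<le> t^2 * (2*(0^k + ((M-1)*(real k*M^k) - M^k)))
     - 2*t*(((M-1)*(real k*M^k) - M^k) - ((M-1)*(real k* s^k) - s^k))
     + (s^k - (s-1)*(real k* s^k) - (M-1)*(M-s)/M*(2*(real k* s^k) + real k*(real k-1)* s^k)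
        + ((M-1)*(real k*M^k) - M^k))"
proof (cases k)
  case 0 then show ?thesis by simp
next
  case (Suc j)
  define A where "A = (M-1)*real k - 1"
  define x where "x = s/M"
  have Mpos: "M > 0" using M2 by simp
  have k1: "real k \<ge> 1" using Suc by simp
  have "(M-1)*real k \<ge> 1*1" by (rule mult_mono) (use M2 k1 in auto)
  then have A0: "A \<ge> 0" unfolding A_def by simp
  have x0: "0 \<le> x" and x1: "x \<le> 1" unfolding x_def using s0 sM Mpos by auto
  have s_eq: "s = M*x" unfolding x_def using Mpos by simp
  have sk: "s^k = M^k*x^k" unfolding s_eq by (simp add: power_mult_distrib)
  define u where "u = 1 - x^k"
  define g where "g = 1 - (real k+1)*x^k + real k*x^(k+1)"
  have ident: "t^2 * (2*(0^k + ((M-1)*(real k*M^k) - M^k)))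
     - 2*t*(((M-1)*(real k*M^k) - M^k) - ((M-1)*(real k* s^k) - s^k))
     + (s^k - (s-1)*(real k* s^k) - (M-1)*(M-s)/M*(2*(real k* s^k) + real k*(real k-1)* s^k)
        + ((M-1)*(real k*M^k) - M^k))
     = A * M^k * (2*t^2 - 2*t*u + g)"
  proof -
    have e: "(M-1)*(M-s)/M = (M-1)*(1-x)" unfolding s_eq using Mpos by (simp add: field_simps)
    have z: "(0::real)^k = 0" using Suc by simp
    show ?thesis unfolding e z sk A_def u_def g_def
      by (simp add: s_eq algebra_simps power_Suc)
  qed
  have "u^2 \<le> 2*g" unfolding u_def g_def using L2[OF x0 x1] by simp
  then have "0 \<le> 2*t^2 - 2*t*u + g"
  proof -
    have "2*t^2 - 2*t*u + g = 2*(t-u/2)^2 + (g - u^2/2)" by (simp add: power2_eq_square algebra_simps)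
    moreover have "0 \<le> (t-u/2)^2" by simp
    ultimately show ?thesis using \<open>u^2 \<le> 2*g\<close> by linarith
  qed
  moreover have "0 \<le> A * M^k" using A0 Mpos by simp
  ultimately show ?thesis unfolding ident by simp
qed

lemma exp_sums:
  fixes mu :: "nat pmf" and f :: "nat \<Rightarrow> real"
  assumes "integrable (measure_pmf mu) f"
  shows "(\<lambda>k. pmf mu k * f k) sums measure_pmf.expectation mu f"
proof -
  have i: "integrable (count_space UNIV) (\<lambda>k. pmf mu k * f k)"
    using assms unfolding measure_pmf_eq_density by (subst (asm) integrable_density) auto
  have "measure_pmf.expectation mu f = integral\<^sup>L (count_space UNIV) (\<lambda>k. pmf mu k * f k)"
    unfolding measure_pmf_eq_density by (subst integral_density) auto
  then show ?thesis using sums_integral_count_space_nat[OF i] by simp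
qed

lemma integrable_pmf_bound:
  fixes mu :: "nat pmf" and f g :: "nat \<Rightarrow> real"
  assumes "integrable (measure_pmf mu) f" "\<And>k. \<bar>g k\<bar> \<le> \<bar>f k\<bar>"
  shows "integrable (measure_pmf mu) g"
  by (rule Bochner_Integration.integrable_bound[OF assms(1)]) (use assms(2) in auto)

lemma pow_le_aux:
  fixes M :: real assumes "M \<ge> 1" shows "M^k \<le> 1 + real k * M^k"
proof (cases k)
  case 0 then show ?thesis by simp
next
  case (Suc j)
  have "0 \<le> M^k" using assms by simp
  moreover have "real k \<ge> 1" using Suc by simp
  ultimately have "1 * M^k \<le> real k * M^k" by (intro mult_right_mono)
  then show ?thesis by simp
qed

definition Qf :: "real \<Rightarrow> real \<Rightarrow> real \<Rightarrow> real \<Rightarrow> real \<Rightarrow> real \<Rightarrow> real \<Rightarrow> real \<Rightarrow> real \<Rightarrow> real" where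
  "Qf t M s e0 eM eKM es eks ekks = t^2 * (2*(e0 + ((M-1)*eKM - eM)))
     - 2*t*(((M-1)*eKM - eM) - ((M-1)*eks - es))
     + (es - (s-1)*eks - (M-1)*(M-s)/M*(2*eks + ekks) + ((M-1)*eKM - eM))"

lemma Qf_sums:
  fixes a f0 f1 f2 f3 f4 f5 :: "nat \<Rightarrow> real"
  assumes "(\<lambda>k. a k * f0 k) sums v0" "(\<lambda>k. a k * f1 k) sums v1" "(\<lambda>k. a k * f2 k) sums v2"
    "(\<lambda>k. a k * f3 k) sums v3" "(\<lambda>k. a k * f4 k) sums v4" "(\<lambda>k. a k * f5 k) sums v5"
  shows "(\<lambda>k. a k * Qf t M s (f0 k) (f1 k) (f2 k) (f3 k) (f4 k) (f5 k)) sums Qf t M s v0 v1 v2 v3 v4 v5"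
proof -
  define c where "c = (M-1)*(M-s)/M"
  have "(\<lambda>k. (2*t^2)*(a k * f0 k) + (-2*t^2+2*t-1)*(a k * f1 k) + ((M-1)*(2*t^2-2*t+1))*(a k * f2 k)
     + (1-2*t)*(a k * f3 k) + (2*t*(M-1) - (s-1) - 2*c)*(a k * f4 k) + (-c)*(a k * f5 k))
     sums ((2*t^2)* v0 + (-2*t^2+2*t-1)* v1 + ((M-1)*(2*t^2-2*t+1))* v2
     + (1-2*t)* v3 + (2*t*(M-1) - (s-1) - 2*c)* v4 + (-c)* v5)"
    by (intro sums_add sums_mult assms)
  moreover have "(\<lambda>k. (2*t^2)*(a k * f0 k) + (-2*t^2+2*t-1)*(a k * f1 k) + ((M-1)*(2*t^2-2*t+1))*(a k * f2 k)
     + (1-2*t)*(a k * f3 k) + (2*t*(M-1) - (s-1) - 2*c)*(a k * f4 k) + (-c)*(a k * f5 k))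
     = (\<lambda>k. a k * Qf t M s (f0 k) (f1 k) (f2 k) (f3 k) (f4 k) (f5 k))"
    unfolding Qf_def c_def[symmetric] by (rule ext) (simp add: algebra_simps power2_eq_square)
  moreover have "((2*t^2)* v0 + (-2*t^2+2*t-1)* v1 + ((M-1)*(2*t^2-2*t+1))* v2
     + (1-2*t)* v3 + (2*t*(M-1) - (s-1) - 2*c)* v4 + (-c)* v5) = Qf t M s v0 v1 v2 v3 v4 v5"
    unfolding Qf_def c_def[symmetric] by (simp add: algebra_simps power2_eq_square)
  ultimately show ?thesis by simp
qed

lemma disc:
  fixes D C T :: real
  assumes "\<And>t. 0 \<le> t^2*D - 2*t*C + T" "0 \<le> D"
  shows "C^2 \<le> D*T"
proof (cases "D = 0")
  case True
  have "C = 0"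
  proof (rule ccontr)
    assume C0: "C \<noteq> 0"
    have h: "0 \<le> ((T+1)/(2*C))^2*D - 2*((T+1)/(2*C))*C + T" by (rule assms(1))
    have "2*((T+1)/(2*C))*C = T+1" using C0 by simp
    then show False using h True by simp
  qed
  then show ?thesis using True by simp
next
  case False
  then have Dp: "D > 0" using assms(2) by simp
  have h: "0 \<le> (C/D)^2*D - 2*(C/D)*C + T" by (rule assms(1))
  have e1: "(C/D)^2*D = C^2/D" using Dp by (simp add: power2_eq_square)
  have e2: "2*(C/D)*C = 2*(C^2/D)" by (simp add: power2_eq_square)
  have "C^2/D \<le> T" using h unfolding e1 e2 by simp
  then show ?thesis using Dp by (simp add: pos_divide_le_eq mult.commute)
qed

lemma main_ineq:
  fixes mu :: "nat pmf" and m :: nat and s :: real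
  assumes m2: "m \<ge> 2" and I: "integrable (measure_pmf mu) (\<lambda>k. real k * real m ^ k)"
    and s0: "0 < s" and sm: "s < real m"
  shows "(delta_c m mu - phi_c m mu s)^2 \<le> 2 * (Hgf mu 0 + delta_c m mu) * Theta_c m mu s"
proof -
  define M where "M = real m"
  define a where "a = pmf mu"
  have M2: "M \<ge> 2" unfolding M_def using m2 by simp
  have IKM: "integrable (measure_pmf mu) (\<lambda>k. real k * M ^ k)" using I unfolding M_def .
  have IM: "integrable (measure_pmf mu) (\<lambda>k. M ^ k)"
  proof (rule integrable_pmf_bound)
    show "integrable (measure_pmf mu) (\<lambda>k. 1 + real k * M ^ k)" using IKM by simp
    show "\<bar>M ^ k\<bar> \<le> \<bar>1 + real k * M ^ k\<bar>" for k using pow_le_aux[of M k] M2 by simp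
  qed
  have Hs: "(\<lambda>k. a k * x^k) sums Hgf mu x" if "\<bar>x\<bar> \<le> M" for x
  proof -
    have "integrable (measure_pmf mu) (\<lambda>k. x ^ k)"
    proof (rule integrable_pmf_bound[OF IM])
      show "\<bar>x ^ k\<bar> \<le> \<bar>M ^ k\<bar>" for k using that by (simp add: power_abs power_mono)
    qed
    then show ?thesis unfolding Hgf_def a_def by (rule exp_sums)
  qed
  have eM: "(\<lambda>k. a k * M^k) sums measure_pmf.expectation mu (\<lambda>k. M^k)"
    unfolding a_def by (rule exp_sums[OF IM])
  have eKM: "(\<lambda>k. a k * (real k * M^k)) sums measure_pmf.expectation mu (\<lambda>k. real k * M^k)"
    unfolding a_def by (rule exp_sums[OF IKM])
  have sm0: "summable (\<lambda>n. a n * z^n)" if "norm z < M" for z :: real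
    using Hs[of z] that by (simp add: sums_summable)
  have sm1: "summable (\<lambda>n. diffs a n * z^n)" if "norm z < M" for z :: real
    by (rule termdiff_converges[OF that sm0])
  have sm2: "summable (\<lambda>n. diffs (diffs a) n * z^n)" if "norm z < M" for z :: real
    by (rule termdiff_converges[OF that sm1])
  define P1 where "P1 z = (\<Sum>n. diffs a n * z^n)" for z :: real
  define P2 where "P2 z = (\<Sum>n. diffs (diffs a) n * z^n)" for z :: real
  have openS: "open {-M<..<M}" by simp
  have dH: "DERIV (Hgf mu) z :> P1 z" if "norm z < M" for z :: real
  proof (rule has_field_derivative_transform_within_open[OF _ openS])
    show "DERIV (\<lambda>z. \<Sum>n. a n * z^n) z :> P1 z" unfolding P1_def
      by (rule termdiffs_strong'[OF sm0 that])
    show "z \<in> {-M<..<M}" using that by auto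
    show "(\<Sum>n. a n * x^n) = Hgf mu x" if "x \<in> {-M<..<M}" for x
    proof -
      have "\<bar>x\<bar> \<le> M" using that by auto
      then show ?thesis using Hs[of x] by (simp add: sums_iff)
    qed
  qed
  have dH': "deriv (Hgf mu) z = P1 z" if "norm z < M" for z :: real
    using dH[OF that] by (rule DERIV_imp_deriv)
  have ddH: "DERIV (deriv (Hgf mu)) z :> P2 z" if "norm z < M" for z :: real
  proof (rule has_field_derivative_transform_within_open[OF _ openS])
    show "DERIV P1 z :> P2 z" unfolding P2_def P1_def
      by (rule termdiffs_strong'[OF sm1 that])
    show "z \<in> {-M<..<M}" using that by auto
    show "P1 x = deriv (Hgf mu) x" if "x \<in> {-M<..<M}" for x
      using dH'[of x] that by auto
  qed
  have ddH': "deriv (deriv (Hgf mu)) s = P2 s"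
    using ddH[of s] s0 sm M_def by (simp add: DERIV_imp_deriv)
  have ns: "norm s < M" using s0 sm M_def by simp
  have S1: "(\<lambda>k. a k * (real k * s^k)) sums (s * deriv (Hgf mu) s)"
  proof -
    have "(\<lambda>n. s * (of_nat n * a n * s^(n - Suc 0))) sums (s * P1 s)"
      unfolding P1_def by (rule sums_mult[OF diffs_equiv[OF sm1[OF ns]]])
    moreover have "(\<lambda>n. s * (of_nat n * a n * s^(n - Suc 0))) = (\<lambda>k. a k * (real k * s^k))"
    proof
      fix n show "s * (of_nat n * a n * s^(n - Suc 0)) = a n * (real n * s^n)"
        by (cases n) (auto simp: algebra_simps)
    qed
    ultimately show ?thesis using dH'[OF ns] by simp
  qed
  have S2: "(\<lambda>k. a k * (real k * (real k - 1) * s^k)) sums (s^2 * deriv (deriv (Hgf mu)) s)"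
  proof -
    define g where "g k = a k * (real k * (real k - 1) * s^k)" for k
    have "(\<lambda>n. s^2 * (of_nat n * diffs a n * s^(n - Suc 0))) sums (s^2 * P2 s)"
      unfolding P2_def by (rule sums_mult[OF diffs_equiv[OF sm2[OF ns]]])
    moreover have "(\<lambda>n. s^2 * (of_nat n * diffs a n * s^(n - Suc 0))) = (\<lambda>n. g (Suc n))"
    proof
      fix n show "s^2 * (of_nat n * diffs a n * s^(n - Suc 0)) = g (Suc n)"
        unfolding g_def diffs_def by (cases n) (auto simp: algebra_simps power2_eq_square)
    qed
    ultimately have "(\<lambda>n. g (Suc n)) sums (s^2 * P2 s)" by simp
    then have "g sums (s^2 * P2 s + g 0)" by (simp add: sums_Suc_iff)
    then show ?thesis unfolding g_def using ddH' by simp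
  qed
  have e0: "(\<lambda>k. a k * 0^k) sums Hgf mu 0" using Hs[of 0] M2 by simp
  have es: "(\<lambda>k. a k * s^k) sums Hgf mu s" using Hs[of s] s0 sm M_def by simp
  have a0: "a k \<ge> 0" for k unfolding a_def by simp
  define EM where "EM = measure_pmf.expectation mu (\<lambda>k. M^k)"
  define EKM where "EKM = measure_pmf.expectation mu (\<lambda>k. real k * M^k)"
  have dl: "delta_c m mu = (M-1)*EKM - EM" unfolding delta_c_def EM_def EKM_def M_def by simp
  have Qs: "(\<lambda>k. a k * Qf t M s (0^k) (M^k) (real k * M^k) (s^k) (real k * s^k) (real k * (real k - 1) * s^k))
     sums Qf t M s (Hgf mu 0) EM EKM (Hgf mu s) (s * deriv (Hgf mu) s) (s^2 * deriv (deriv (Hgf mu)) s)" for t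
    unfolding EM_def EKM_def by (rule Qf_sums[OF e0 eM eKM es S1 S2])
  have Qnn: "0 \<le> Qf t M s (Hgf mu 0) EM EKM (Hgf mu s) (s * deriv (Hgf mu) s) (s^2 * deriv (deriv (Hgf mu)) s)" for t
  proof (rule sums_le[OF _ sums_zero Qs])
    show "0 \<le> a k * Qf t M s (0^k) (M^k) (real k * M^k) (s^k) (real k * s^k) (real k * (real k - 1) * s^k)" for k
      unfolding Qf_def by (rule mult_nonneg_nonneg[OF a0 perk[OF M2 s0 sm[folded M_def]]])
  qed
  have Dnn: "0 \<le> 2 * (Hgf mu 0 + delta_c m mu)"
  proof -
    have Ds: "(\<lambda>k. 2 * (a k * 0^k) + (2*(M-1)) * (a k * (real k * M^k)) + (-2) * (a k * M^k))
      sums (2 * Hgf mu 0 + (2*(M-1)) * EKM + (-2) * EM)"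
      unfolding EM_def EKM_def by (intro sums_add sums_mult e0 eM eKM)
    have Dk: "0 \<le> 2 * (a k * 0^k) + (2*(M-1)) * (a k * (real k * M^k)) + (-2) * (a k * M^k)" for k
    proof (cases k)
      case 0 then show ?thesis by simp
    next
      case (Suc j)
      have k1: "real k \<ge> 1" using Suc by simp
      have "(M-1)*real k \<ge> 1*1" by (rule mult_mono) (use M2 k1 in auto)
      then have A0: "0 \<le> (M-1)*real k - 1" by simp
      have "0 \<le> a k * (((M-1)*real k - 1) * M^k)"
        by (intro mult_nonneg_nonneg a0 A0) (use M2 in simp)
      moreover have "2 * (a k * 0^k) + (2*(M-1)) * (a k * (real k * M^k)) + (-2) * (a k * M^k)
          = 2 * (a k * (((M-1)*real k - 1) * M^k))" using Suc by (simp add: algebra_simps)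
      ultimately show ?thesis by simp
    qed
    have "0 \<le> 2 * Hgf mu 0 + (2*(M-1)) * EKM + (-2) * EM"
      by (rule sums_le[OF Dk sums_zero Ds])
    then show ?thesis unfolding dl by (simp add: algebra_simps)
  qed
  have Qeq: "Qf t M s (Hgf mu 0) EM EKM (Hgf mu s) (s * deriv (Hgf mu) s) (s^2 * deriv (deriv (Hgf mu)) s)
     = t^2 * (2 * (Hgf mu 0 + delta_c m mu)) - 2*t*(delta_c m mu - phi_c m mu s) + Theta_c m mu s" for t
    unfolding Qf_def dl phi_c_def Theta_c_def M_def by (simp add: algebra_simps)
  have Qt: "0 \<le> t^2 * (2 * (Hgf mu 0 + delta_c m mu)) - 2*t*(delta_c m mu - phi_c m mu s) + Theta_c m mu s" for t
    using Qnn[of t] unfolding Qeq .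
  show ?thesis by (rule disc[OF Qt Dnn])
qed

lemma sum_law_fin:
  fixes M :: real
  assumes M1: "M \<ge> 1" and fin: "(\<integral>\<^sup>+x. ennreal ((real x + 1) * M^x) \<partial>measure_pmf mu) < \<infinity>"
  shows "(\<integral>\<^sup>+x. ennreal ((real x + 1) * M^x) \<partial>measure_pmf (sum_law j mu)) < \<infinity>"
proof (induction j)
  case 0 then show ?case by simp
next
  case (Suc j)
  define F where "F x = ennreal ((real x + 1) * M^x)" for x :: nat
  have Fm: "F (x+y) \<le> F x * F y" for x y
  proof -
    have "(real (x+y) + 1) * M^(x+y) \<le> ((real x + 1) * M^x) * ((real y + 1) * M^y)"
    proof -
      have "real (x+y) + 1 \<le> (real x + 1) * (real y + 1)" by (simp add: algebra_simps)
      moreover have "0 \<le> M^x * M^y" using M1 by simp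
      ultimately have "(real (x+y) + 1) * (M^x * M^y) \<le> ((real x + 1) * (real y + 1)) * (M^x * M^y)"
        by (rule mult_right_mono)
      then show ?thesis by (simp add: power_add algebra_simps)
    qed
    then show ?thesis unfolding F_def using M1 by (simp add: ennreal_mult[symmetric] ennreal_leI)
  qed
  have "(\<integral>\<^sup>+x. F x \<partial>measure_pmf (sum_law (Suc j) mu))
      = (\<integral>\<^sup>+x. \<integral>\<^sup>+y. F (x+y) \<partial>measure_pmf (sum_law j mu) \<partial>measure_pmf mu)" by simp
  also have "\<dots> \<le> (\<integral>\<^sup>+x. F x * (\<integral>\<^sup>+y. F y \<partial>measure_pmf (sum_law j mu)) \<partial>measure_pmf mu)"
    by (intro nn_integral_mono) (simp add: nn_integral_cmult[symmetric] nn_integral_mono Fm)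
  also have "\<dots> = (\<integral>\<^sup>+x. F x \<partial>measure_pmf mu) * (\<integral>\<^sup>+y. F y \<partial>measure_pmf (sum_law j mu))"
    by (simp add: nn_integral_multc)
  also have "\<dots> < \<infinity>" using fin Suc.IH unfolding F_def by (simp add: ennreal_mult_less_top)
  finally show ?case unfolding F_def .
qed

lemma sys_fin:
  fixes m :: nat and Xs :: "nat pmf"
  assumes m1: "m \<ge> 1" and fin: "(\<integral>\<^sup>+x. ennreal ((real x + 1) * real m^x) \<partial>measure_pmf Xs) < \<infinity>"
  shows "(\<integral>\<^sup>+x. ennreal ((real x + 1) * real m^x) \<partial>measure_pmf (sys_law m (init_law p Xs) n)) < \<infinity>"
proof (induction n)
  case 0
  define K where "K = (\<integral>\<^sup>+x. ennreal ((real x + 1) * real m^x) \<partial>measure_pmf Xs) + 1"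
  have "(\<integral>\<^sup>+x. ennreal ((real x + 1) * real m^x) \<partial>measure_pmf (init_law p Xs))
     = (\<integral>\<^sup>+b. (\<integral>\<^sup>+x. ennreal ((real x + 1) * real m^x) \<partial>measure_pmf (if b then Xs else return_pmf 0)) \<partial>measure_pmf (bernoulli_pmf p))"
    unfolding init_law_def by simp
  also have "\<dots> \<le> (\<integral>\<^sup>+b. K \<partial>measure_pmf (bernoulli_pmf p))"
    by (intro nn_integral_mono) (auto simp: K_def)
  also have "\<dots> = K" by (simp add: measure_pmf.emeasure_space_1)
  also have "\<dots> < \<infinity>" unfolding K_def using fin by simp
  finally show ?case by simp
next
  case (Suc n)
  have "(\<integral>\<^sup>+x. ennreal ((real x + 1) * real m^x) \<partial>measure_pmf (sys_law m (init_law p Xs) (Suc n)))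
     = (\<integral>\<^sup>+x. ennreal ((real (x-1) + 1) * real m^(x-1)) \<partial>measure_pmf (sum_law m (sys_law m (init_law p Xs) n)))"
    by simp
  also have "\<dots> \<le> (\<integral>\<^sup>+x. ennreal ((real x + 1) * real m^x) \<partial>measure_pmf (sum_law m (sys_law m (init_law p Xs) n)))"
  proof (intro nn_integral_mono ennreal_leI mult_mono)
    fix x :: nat
    show "real (x-1) + 1 \<le> real x + 1" by simp
    show "real m^(x-1) \<le> real m^x" using m1 by (intro power_increasing) auto
  qed auto
  also have "\<dots> < \<infinity>" by (rule sum_law_fin[OF _ Suc.IH]) (use m1 in simp)
  finally show ?case .
qed

lemma sys_integrable:
  fixes m :: nat and Xs :: "nat pmf"
  assumes m1: "m \<ge> 1" and supp: "set_pmf Xs \<subseteq> {1..}"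
    and I: "integrable (measure_pmf Xs) (\<lambda>k. real k * real m ^ k)"
  shows "integrable (measure_pmf (sys_law m (init_law p Xs) n)) (\<lambda>k. real k * real m ^ k)"
proof -
  have "(\<integral>\<^sup>+x. ennreal (norm (real x * real m ^ x)) \<partial>measure_pmf Xs) < \<infinity>"
    using I by (simp add: integrable_iff_bounded)
  then have f2: "(\<integral>\<^sup>+x. 2 * ennreal (norm (real x * real m ^ x)) \<partial>measure_pmf Xs) < \<infinity>"
    by (simp add: nn_integral_cmult ennreal_mult_less_top)
  have "(\<integral>\<^sup>+x. ennreal ((real x + 1) * real m^x) \<partial>measure_pmf Xs)
      \<le> (\<integral>\<^sup>+x. 2 * ennreal (norm (real x * real m ^ x)) \<partial>measure_pmf Xs)"
  proof (rule nn_integral_mono_AE)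
    show "AE x in measure_pmf Xs. ennreal ((real x + 1) * real m^x) \<le> 2 * ennreal (norm (real x * real m ^ x))"
    proof (subst AE_measure_pmf_iff, intro ballI)
      fix x assume "x \<in> set_pmf Xs"
      then have x1: "real x \<ge> 1" using supp by auto
      have "(real x + 1) * real m^x \<le> (2 * real x) * real m^x"
        by (rule mult_right_mono) (use x1 in auto)
      then show "ennreal ((real x + 1) * real m^x) \<le> 2 * ennreal (norm (real x * real m ^ x))"
      proof -
        have "ennreal ((real x + 1) * real m^x) \<le> ennreal (2 * norm (real x * real m ^ x))"
          using \<open>(real x + 1) * real m^x \<le> (2 * real x) * real m^x\<close>
          by (intro ennreal_leI) (simp add: abs_mult)
        moreover have "ennreal (2 * norm (real x * real m ^ x)) = 2 * ennreal (norm (real x * real m ^ x))"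
          by (subst ennreal_mult) auto
        ultimately show ?thesis by metis
      qed
    qed
  qed
  then have fin: "(\<integral>\<^sup>+x. ennreal ((real x + 1) * real m^x) \<partial>measure_pmf Xs) < \<infinity>"
    using f2 by (rule le_less_trans)
  have fin2: "(\<integral>\<^sup>+x. ennreal ((real x + 1) * real m^x) \<partial>measure_pmf (sys_law m (init_law p Xs) n)) < \<infinity>"
    by (rule sys_fin[OF m1 fin])
  have "(\<integral>\<^sup>+x. ennreal (norm (real x * real m ^ x)) \<partial>measure_pmf (sys_law m (init_law p Xs) n))
     \<le> (\<integral>\<^sup>+x. ennreal ((real x + 1) * real m^x) \<partial>measure_pmf (sys_law m (init_law p Xs) n))"
    by (intro nn_integral_mono ennreal_leI) (simp add: abs_mult mult_right_mono)
  then have "(\<integral>\<^sup>+x. ennreal (norm (real x * real m ^ x)) \<partial>measure_pmf (sys_law m (init_law p Xs) n)) < \<infinity>"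
    using fin2 by (rule le_less_trans)
  then show ?thesis by (simp add: integrable_iff_bounded)
qed

theorem lemma3p4:
  fixes m :: nat and Xs :: "nat pmf" and p :: real and n :: nat and s :: real
  assumes "m \<ge> 2"
    and "set_pmf Xs \<subseteq> {1..}"
    and "measure_pmf.prob Xs {2..} > 0"
    and "integrable (measure_pmf Xs) (\<lambda>k. real k * real m ^ k)"
    and "p > p_crit m Xs" and "p \<le> 1"
    and "0 < s" and "s < real m"
  shows "(delta_c m (sys_law m (init_law p Xs) n) - phi_c m (sys_law m (init_law p Xs) n) s)^2
         \<le> 2 * (Hgf (sys_law m (init_law p Xs) n) 0 + delta_c m (sys_law m (init_law p Xs) n))
             * Theta_c m (sys_law m (init_law p Xs) n) s"
proof (rule main_ineq)
  show "integrable (measure_pmf (sys_law m (init_law p Xs) n)) (\<lambda>k. real k * real m ^ k)"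
    by (rule sys_integrable) (use assms in auto)
qed (use assms in auto)

end
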